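(* Let $S$ be a modal left $E$-monoid. Then $S$ is an inductive left $E$-monoid if and only if for all $e,f\in E$ there exists $g\in E$ with $(e\cdot f)e\sim_r g$; in that case $e\wedge f=g$ (the meet in $(E,\le_r)$), and moreover $e\wedge f=e\wedge(e\cdot f)$ for all $e,f\in E$. If $S$ is an inductive left $E$-monoid and $E$ is right reduced, then $e\wedge f=(e\cdot f)e$ for all $e,f\in E$.
   Context: For a semigroup $S$, $E(S)$ is its set of idempotents; for $e,f\in E(S)$, $e\le_r f$ iff $e=ef$, and $e\sim_r f$ iff $e\le_r f$ and $f\le_r e$. $E\subseteq E(S)$ is right pre-reduced if $e=ef$ and $f=fe$ imply $e=f$ for $e,f\in E$; it is right reduced if for all $e,f\in E$, $e=ef$ implies $e=fe$. Let $S$ be a monoid and $1\in E\subseteq E(S)$. $S$ is a modal left $E$-monoid if $E$ is right pre-reduced and (I1') for all $t\in S$, $e\in E$ there is $t\cdot e\in E$ such that for all $s\in S$: $ste=st$ iff $s(t\cdot e)=s$; the (necessarily unique) map $(t,e)\mapsto t\cdot e$ is the left $E$-modal operation. $S$ is an inductive left $E$-monoid if it is a modal left $E$-monoid, $(E,\le_r)$ is a meet-semilattice with meet $\wedge$, and (I2') for $s\in S$, $e,f\in E$: $se=sf=s$ implies $s(e\wedge f)=s$. *)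

theory Defs
  imports Main
begin

definition idem :: "'a::monoid_mult \<Rightarrow> bool" where
  "idem e \<longleftrightarrow> e * e = e"

definition le_r :: "'a::monoid_mult \<Rightarrow> 'a \<Rightarrow> bool" where
  "le_r e f \<longleftrightarrow> e = e * f"

definition sim_r :: "'a::monoid_mult \<Rightarrow> 'a \<Rightarrow> bool" where
  "sim_r e f \<longleftrightarrow> le_r e f \<and> le_r f e"

definition right_pre_reduced :: "'a::monoid_mult set \<Rightarrow> bool" where
  "right_pre_reduced E \<longleftrightarrow> (\<forall>e\<in>E. \<forall>f\<in>E. e = e * f \<and> f = f * e \<longrightarrow> e = f)"

definition right_reduced :: "'a::monoid_mult set \<Rightarrow> bool" where
  "right_reduced E \<longleftrightarrow> (\<forall>e\<in>E. \<forall>f\<in>E. e = e * f \<longrightarrow> e = f * e)"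

text \<open>Condition (I1') for a candidate value g of t \<cdot> e.\<close>
definition modal_val :: "'a::monoid_mult set \<Rightarrow> 'a \<Rightarrow> 'a \<Rightarrow> 'a \<Rightarrow> bool" where
  "modal_val E t e g \<longleftrightarrow> g \<in> E \<and> (\<forall>s. s * t * e = s * t \<longleftrightarrow> s * g = s)"

definition modal_left_E_monoid :: "'a::monoid_mult set \<Rightarrow> bool" where
  "modal_left_E_monoid E \<longleftrightarrow>
     1 \<in> E \<and> (\<forall>e\<in>E. idem e) \<and> right_pre_reduced E \<and>
     (\<forall>t. \<forall>e\<in>E. \<exists>g. modal_val E t e g)"

definition modal_dot :: "'a::monoid_mult set \<Rightarrow> 'a \<Rightarrow> 'a \<Rightarrow> 'a" where
  "modal_dot E t e = (THE g. modal_val E t e g)"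

definition is_meet :: "'a::monoid_mult set \<Rightarrow> 'a \<Rightarrow> 'a \<Rightarrow> 'a \<Rightarrow> bool" where
  "is_meet E e f m \<longleftrightarrow> m \<in> E \<and> le_r m e \<and> le_r m f \<and>
     (\<forall>h\<in>E. le_r h e \<and> le_r h f \<longrightarrow> le_r h m)"

definition meet_r :: "'a::monoid_mult set \<Rightarrow> 'a \<Rightarrow> 'a \<Rightarrow> 'a" where
  "meet_r E e f = (THE m. is_meet E e f m)"

definition meet_semilattice_r :: "'a::monoid_mult set \<Rightarrow> bool" where
  "meet_semilattice_r E \<longleftrightarrow>
     (\<forall>e\<in>E. le_r e e) \<and>
     (\<forall>e\<in>E. \<forall>f\<in>E. \<forall>g\<in>E. le_r e f \<and> le_r f g \<longrightarrow> le_r e g) \<and>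
     (\<forall>e\<in>E. \<forall>f\<in>E. le_r e f \<and> le_r f e \<longrightarrow> e = f) \<and>
     (\<forall>e\<in>E. \<forall>f\<in>E. \<exists>m. is_meet E e f m)"

definition inductive_left_E_monoid :: "'a::monoid_mult set \<Rightarrow> bool" where
  "inductive_left_E_monoid E \<longleftrightarrow>
     modal_left_E_monoid E \<and> meet_semilattice_r E \<and>
     (\<forall>s. \<forall>e\<in>E. \<forall>f\<in>E. s * e = s \<and> s * f = s \<longrightarrow> s * meet_r E e f = s)"

end

theory Submission
  imports Defs
begin

lemma mv_uniq:
  assumes "modal_left_E_monoid E" "modal_val E t e g" "modal_val E t e g'"
  shows "g = g'"
proof -
  from assms(1) have rp: "right_pre_reduced E" and id: "\<forall>e\<in>E. idem e"
    unfolding modal_left_E_monoid_def by auto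
  have gE: "g \<in> E" "g' \<in> E" using assms(2,3) unfolding modal_val_def by auto
  have "g * g = g" using id gE unfolding idem_def by auto
  hence "g * g' = g" using assms(2,3) unfolding modal_val_def by metis
  moreover have "g' * g' = g'" using id gE unfolding idem_def by auto
  hence "g' * g = g'" using assms(2,3) unfolding modal_val_def by metis
  ultimately show ?thesis using rp gE unfolding right_pre_reduced_def by metis
qed

lemma mv_dot:
  assumes "modal_left_E_monoid E" "e \<in> E"
  shows "modal_val E t e (modal_dot E t e)"
proof -
  obtain g where g: "modal_val E t e g" using assms unfolding modal_left_E_monoid_def by blast
  show ?thesis unfolding modal_dot_def
    by (rule theI[of _ g]) (use g mv_uniq[OF assms(1)] in auto)
qed

lemma is_meetD:
  assumes "is_meet E e f m"
  shows "m \<in> E" "m * e = m" "m * f = m" "\<And>k. k \<in> E \<Longrightarrow> k * e = k \<Longrightarrow> k * f = k \<Longrightarrow> k * m = k"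
proof -
  have c: "m \<in> E" "le_r m e" "le_r m f" "\<forall>h\<in>E. le_r h e \<and> le_r h f \<longrightarrow> le_r h m"
    using assms unfolding is_meet_def by blast+
  show "m \<in> E" by (fact c(1))
  show "m * e = m" using c(2) unfolding le_r_def by (rule sym)
  show "m * f = m" using c(3) unfolding le_r_def by (rule sym)
  fix k assume k: "k \<in> E" "k * e = k" "k * f = k"
  have "le_r k e" "le_r k f" unfolding le_r_def using k by simp_all
  hence "le_r k m" using c(4) k(1) by blast
  thus "k * m = k" unfolding le_r_def by (rule sym)
qed

lemma is_meetI:
  assumes "m \<in> E" "m * e = m" "m * f = m" "\<And>k. k \<in> E \<Longrightarrow> k * e = k \<Longrightarrow> k * f = k \<Longrightarrow> k * m = k"
  shows "is_meet E e f m"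
  unfolding is_meet_def le_r_def using assms by (metis)

lemma meet_uniq:
  assumes "modal_left_E_monoid E" "is_meet E e f m"
  shows "meet_r E e f = m"
proof -
  from assms(1) have rp: "right_pre_reduced E"
    unfolding modal_left_E_monoid_def by auto
  note D = is_meetD[OF assms(2)]
  have u: "m' = m" if "is_meet E e f m'" for m'
  proof -
    note D' = is_meetD[OF that]
    have a: "m' * m = m'" using D(4)[OF D'(1,2,3)] .
    have b: "m * m' = m" using D'(4)[OF D(1,2,3)] .
    have "\<forall>e\<in>E. \<forall>f\<in>E. e = e * f \<and> f = f * e \<longrightarrow> e = f" using rp unfolding right_pre_reduced_def .
    hence "m' = m' * m \<and> m = m * m' \<longrightarrow> m' = m" using D(1) D'(1) by blast
    thus ?thesis using a b by simp
  qed
  show ?thesis unfolding meet_r_def by (rule the_equality[where P="is_meet E e f", OF assms(2) u])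
qed

lemma idE: "modal_left_E_monoid E \<Longrightarrow> e \<in> E \<Longrightarrow> e * e = e"
  unfolding modal_left_E_monoid_def idem_def by auto

lemma key:
  assumes M: "modal_left_E_monoid E" and e: "e \<in> E" and f: "f \<in> E"
  defines "d \<equiv> modal_dot E e f"
  defines "h \<equiv> d * e"
  shows "d \<in> E" "\<And>s. s * d = s \<longleftrightarrow> s * e * f = s * e"
    "h * e = h" "h * f = h" "\<And>k. k * e = k \<Longrightarrow> k * f = k \<Longrightarrow> k * h = k"
    "\<And>k. k * e = k \<Longrightarrow> k * f = k \<Longrightarrow> k * d = k"
proof -
  have mv: "modal_val E e f d" using mv_dot[OF M f] d_def by simp
  show dE: "d \<in> E" using mv unfolding modal_val_def by auto
  show sd: "\<And>s. s * d = s \<longleftrightarrow> s * e * f = s * e" using mv unfolding modal_val_def by auto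
  have ee: "e * e = e" using idE[OF M e] .
  show "h * e = h" unfolding h_def using ee by (simp add: mult.assoc)
  have "d * d = d" using idE[OF M dE] .
  hence "d * e * f = d * e" using sd by blast
  thus "h * f = h" unfolding h_def .
  show kd: "\<And>k. k * e = k \<Longrightarrow> k * f = k \<Longrightarrow> k * d = k" using sd by metis
  show "\<And>k. k * e = k \<Longrightarrow> k * f = k \<Longrightarrow> k * h = k"
    unfolding h_def by (metis kd mult.assoc)
qed

theorem proposition5p7:
  fixes E :: "'a::monoid_mult set"
  assumes "modal_left_E_monoid E"
  shows "(inductive_left_E_monoid E \<longleftrightarrow>
            (\<forall>e\<in>E. \<forall>f\<in>E. \<exists>g\<in>E. sim_r (modal_dot E e f * e) g))
       \<and> (inductive_left_E_monoid E \<longrightarrow>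
            (\<forall>e\<in>E. \<forall>f\<in>E. \<forall>g\<in>E. sim_r (modal_dot E e f * e) g \<longrightarrow> meet_r E e f = g)
          \<and> (\<forall>e\<in>E. \<forall>f\<in>E. meet_r E e f = meet_r E e (modal_dot E e f)))
       \<and> (inductive_left_E_monoid E \<and> right_reduced E \<longrightarrow>
            (\<forall>e\<in>E. \<forall>f\<in>E. meet_r E e f = modal_dot E e f * e))"
proof -
  note M = assms
  have rp: "right_pre_reduced E" using M unfolding modal_left_E_monoid_def by auto
  have simD: "a * b = a" "b * a = b" if "sim_r a b" for a b :: 'a
    using that unfolding sim_r_def le_r_def by (auto intro: sym)
  have gmeet: "is_meet E e f g" if e: "e \<in> E" and f: "f \<in> E" and g: "g \<in> E"
     and sim: "sim_r (modal_dot E e f * e) g" for e f g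
  proof -
    let ?h = "modal_dot E e f * e"
    note K = key[OF M e f]
    have hg: "?h * g = ?h" and gh: "g * ?h = g" using simD[OF sim] by auto
    have 1: "g * e = g" using gh K(3) by (metis mult.assoc)
    moreover have 2: "g * f = g" using gh K(4) by (metis mult.assoc)
    moreover have 3: "k * g = k" if "k \<in> E" "k * e = k" "k * f = k" for k
    proof -
      have "k * ?h = k" using K(5)[OF that(2,3)] .
      hence "k * (?h * g) = k" using hg by simp
      thus ?thesis by (metis mult.assoc \<open>k * ?h = k\<close>)
    qed
    show ?thesis by (rule is_meetI[OF g 1 2 3])
  qed
  have meetsim: "sim_r (modal_dot E e f * e) m" if e: "e \<in> E" and f: "f \<in> E"
     and I: "inductive_left_E_monoid E" and m: "is_meet E e f m" for e f m
  proof -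
    note K = key[OF M e f]
    note D = is_meetD[OF m]
    have mr: "meet_r E e f = m" using meet_uniq[OF M m] .
    have a: "m * (modal_dot E e f * e) = m" using K(5)[OF D(2,3)] .
    have i2: "\<forall>s. \<forall>e\<in>E. \<forall>f\<in>E. s * e = s \<and> s * f = s \<longrightarrow> s * meet_r E e f = s"
      using I unfolding inductive_left_E_monoid_def by blast
    have b: "(modal_dot E e f * e) * m = modal_dot E e f * e"
      using i2 K(3,4) e f unfolding mr[symmetric] by blast
    show ?thesis unfolding sim_r_def le_r_def using a b by simp
  qed
  have semil: "meet_semilattice_r E" if ex: "\<forall>e\<in>E. \<forall>f\<in>E. \<exists>m. is_meet E e f m"
    unfolding meet_semilattice_r_def
  proof (intro conjI)
    show "\<forall>e\<in>E. le_r e e" unfolding le_r_def using idE[OF M] by (metis)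
    show "\<forall>e\<in>E. \<forall>f\<in>E. \<forall>g\<in>E. le_r e f \<and> le_r f g \<longrightarrow> le_r e g"
      unfolding le_r_def by (metis mult.assoc)
    show "\<forall>e\<in>E. \<forall>f\<in>E. le_r e f \<and> le_r f e \<longrightarrow> e = f"
      using rp unfolding le_r_def right_pre_reduced_def by blast
  qed (rule ex)
  have A: "inductive_left_E_monoid E \<longleftrightarrow>
            (\<forall>e\<in>E. \<forall>f\<in>E. \<exists>g\<in>E. sim_r (modal_dot E e f * e) g)"
  proof
    assume I: "inductive_left_E_monoid E"
    show "\<forall>e\<in>E. \<forall>f\<in>E. \<exists>g\<in>E. sim_r (modal_dot E e f * e) g"
    proof (intro ballI)
      fix e f assume e: "e \<in> E" and f: "f \<in> E"
      obtain m where m: "is_meet E e f m" using I e f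
        unfolding inductive_left_E_monoid_def meet_semilattice_r_def by blast
      show "\<exists>g\<in>E. sim_r (modal_dot E e f * e) g" using meetsim[OF e f I m] is_meetD(1)[OF m] by blast
    qed
  next
    assume H: "\<forall>e\<in>E. \<forall>f\<in>E. \<exists>g\<in>E. sim_r (modal_dot E e f * e) g"
    have ex: "\<forall>e\<in>E. \<forall>f\<in>E. \<exists>m. is_meet E e f m"
    proof (intro ballI)
      fix e f assume e: "e \<in> E" and f: "f \<in> E"
      obtain g where g: "g \<in> E" "sim_r (modal_dot E e f * e) g" using H e f by blast
      show "\<exists>m. is_meet E e f m" using gmeet[OF e f g] by blast
    qed
    have i2: "s * meet_r E e f = s" if e: "e \<in> E" and f: "f \<in> E" and se: "s * e = s" and sf: "s * f = s" for s e f
    proof -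
      obtain g where g: "g \<in> E" "sim_r (modal_dot E e f * e) g" using H e f by blast
      note K = key[OF M e f]
      have mg: "meet_r E e f = g" using meet_uniq[OF M gmeet[OF e f g]] .
      have sh: "s * (modal_dot E e f * e) = s" using K(5)[OF se sf] .
      have "s * g = s * (modal_dot E e f * e) * g" using sh by simp
      also have "\<dots> = s * (modal_dot E e f * e)" using simD(1)[OF g(2)] by (simp add: mult.assoc)
      also have "\<dots> = s" by (fact sh)
      finally show ?thesis using mg by simp
    qed
    show "inductive_left_E_monoid E" unfolding inductive_left_E_monoid_def
      using M semil[OF ex] i2 by blast
  qed
  have B: "\<forall>e\<in>E. \<forall>f\<in>E. \<forall>g\<in>E. sim_r (modal_dot E e f * e) g \<longrightarrow> meet_r E e f = g"
    using gmeet meet_uniq[OF M] by blast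
  have C: "meet_r E e f = meet_r E e (modal_dot E e f)"
    if I: "inductive_left_E_monoid E" and e: "e \<in> E" and f: "f \<in> E" for e f
  proof -
    note K = key[OF M e f]
    obtain m where m: "is_meet E e f m" using I e f
      unfolding inductive_left_E_monoid_def meet_semilattice_r_def by blast
    note D = is_meetD[OF m]
    have "is_meet E e (modal_dot E e f) m"
    proof (rule is_meetI[OF D(1) D(2)])
      show "m * modal_dot E e f = m" using K(6)[OF D(2,3)] .
      fix k assume k: "k \<in> E" "k * e = k" "k * modal_dot E e f = k"
      have "k * e * f = k * e" using K(2) k(3) by blast
      hence "k * f = k" using k(2) by simp
      thus "k * m = k" using D(4) k(1,2) by blast
    qed
    thus ?thesis using meet_uniq[OF M] m by metis
  qed
  have Dd: "meet_r E e f = modal_dot E e f * e"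
    if I: "inductive_left_E_monoid E" and R: "right_reduced E" and e: "e \<in> E" and f: "f \<in> E" for e f
  proof -
    note K = key[OF M e f]
    obtain m where m: "is_meet E e f m" using I e f
      unfolding inductive_left_E_monoid_def meet_semilattice_r_def by blast
    note D = is_meetD[OF m]
    have rr: "\<forall>e\<in>E. \<forall>f\<in>E. e = e * f \<longrightarrow> e = f * e" using R unfolding right_reduced_def .
    have md: "m * modal_dot E e f = m" using K(6)[OF D(2,3)] .
    have em: "m = e * m" using rr D(1) e D(2) by metis
    have dm: "m = modal_dot E e f * m" using rr md K(1) D(1) by metis
    have sim: "sim_r (modal_dot E e f * e) m" using meetsim[OF e f I m] .
    have "modal_dot E e f * e = modal_dot E e f * e * m" using simD(1)[OF sim] by simp
    also have "\<dots> = modal_dot E e f * (e * m)" by (simp add: mult.assoc)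
    also have "\<dots> = m" using em dm by simp
    finally show ?thesis using meet_uniq[OF M m] by simp
  qed
  show ?thesis using A B C Dd by blast
qed

end
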